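(* Let $K$ be a field of characteristic zero, let $(p_n(x))_{n\ge0}$ be a sequence of polynomials in $K[x]$ with $\deg p_n=n$, and let $F^{(y)}:K[x]\to K[x,y]$ be a $K$-linear operator with $F^{(y)}p_n(x)=\sum_{k=0}^np_k(x)p_{n-k}(y)$ for all $n\ge0$. Identify $K[x,y]$ with $K[x]\otimes K[x]$ via $x^iy^j\mapsto x^i\otimes x^j$, and let $\epsilon:K[x]\to K$ be the linear map with $\epsilon p_n=\delta_{n0}$, so that $(K[x],F^{(y)},\epsilon)$ is a coalgebra. Suppose this coalgebra is a bialgebra with respect to the usual multiplication of polynomials. Then there is a constant $c\in K$ such that $F^{(y)}=E^{y-c}$, i.e. $F^{(y)}p(x)=p(x+y-c)$; consequently $(p_n(x))_{n\ge0}$ is a Sheffer sequence; the counit $\epsilon$ is evaluation at $x=c$; and this bialgebra is a Hopf algebra with antipode $\omega:(x-c)^n\mapsto(-1)^n(x-c)^n$.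
   Context: A coalgebra $(V,\Delta,\epsilon)$ has comultiplication $\Delta:V\to V\otimes V$ and counit $\epsilon:V\to K$ satisfying $(I\otimes\Delta)\Delta=(\Delta\otimes I)\Delta$ and $(\epsilon\otimes I)\Delta=I=(I\otimes\epsilon)\Delta$; it is a bialgebra with respect to a multiplication if $\Delta$ and $\epsilon$ are unital algebra homomorphisms. A sequence $(s_n(x))$ with $\deg s_n=n$ is Sheffer if there is a divided power sequence $(q_n)$ (i.e. $\deg q_n=n$ and $q_n(x+y)=\sum_{k}q_k(x)q_{n-k}(y)$) with $s_n(x+y)=\sum_{k=0}^nq_{n-k}(y)s_k(x)$ for all $n$. *)

theory Defs
  imports "HOL-Computational_Algebra.Polynomial"
begin

text \<open>Convention: K[x,y] is represented as 'a poly poly, the outer variable being y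
  and the coefficients being polynomials in x.  Under the identification
  x^i y^j = x^i \<otimes> x^j, the left tensor factor is the inner (x) variable and the right
  tensor factor is the outer (y) variable.\<close>

definition lift_x :: "'a::comm_ring_1 poly \<Rightarrow> 'a poly poly" where
  "lift_x p = [:p:]"

definition lift_y :: "'a::comm_ring_1 poly \<Rightarrow> 'a poly poly" where
  "lift_y p = map_poly (\<lambda>a. [:a:]) p"

definition shift_xy :: "'a::comm_ring_1 \<Rightarrow> 'a poly \<Rightarrow> 'a poly poly" where
  "shift_xy c p = poly (map_poly (\<lambda>a. [:[:a:]:]) p) [:[:-c, 1:], 1:]"
  \<comment> \<open>p(x + y - c) in K[x,y]\<close>

definition divided_power_seq :: "(nat \<Rightarrow> 'a::comm_ring_1 poly) \<Rightarrow> bool" where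
  "divided_power_seq q \<longleftrightarrow> (\<forall>n. degree (q n) = n) \<and>
     (\<forall>n. shift_xy 0 (q n) = (\<Sum>k\<le>n. lift_x (q k) * lift_y (q (n - k))))"

definition sheffer :: "(nat \<Rightarrow> 'a::comm_ring_1 poly) \<Rightarrow> bool" where
  "sheffer s \<longleftrightarrow> (\<forall>n. degree (s n) = n) \<and>
     (\<exists>q. divided_power_seq q \<and>
        (\<forall>n. shift_xy 0 (s n) = (\<Sum>k\<le>n. lift_y (q (n - k)) * lift_x (s k))))"

text \<open>Multiplication map m : K[x] \<otimes> K[x] \<rightarrow> K[x] composed with (S \<otimes> I) resp. (I \<otimes> S).\<close>

definition mult_S_id :: "('a::comm_ring_1 poly \<Rightarrow> 'a poly) \<Rightarrow> 'a poly poly \<Rightarrow> 'a poly" where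
  "mult_S_id S P = (\<Sum>j\<le>degree P. S (coeff P j) * monom 1 j)"

definition mult_id_S :: "('a::comm_ring_1 poly \<Rightarrow> 'a poly) \<Rightarrow> 'a poly poly \<Rightarrow> 'a poly" where
  "mult_id_S S P = (\<Sum>j\<le>degree P. coeff P j * S (monom 1 j))"

definition is_antipode ::
  "('a::comm_ring_1 poly \<Rightarrow> 'a poly poly) \<Rightarrow> ('a poly \<Rightarrow> 'a) \<Rightarrow> ('a poly \<Rightarrow> 'a poly) \<Rightarrow> bool" where
  "is_antipode Delta eps S \<longleftrightarrow>
     (\<forall>q. mult_S_id S (Delta q) = [:eps q:] \<and> mult_id_S S (Delta q) = [:eps q:])"

end

theory Submission
  imports Defs
begin


lemma lift_y_pCons: "lift_y (pCons a b) = pCons [:a:] (lift_y b)"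
  by (simp add: lift_y_def map_poly_pCons)

lemma lift_y_0[simp]: "lift_y 0 = 0" by (simp add: lift_y_def)
lemma shift_0[simp]: "shift_xy d 0 = 0" by (simp add: shift_xy_def)

lemma poly_lift_y: "poly (lift_y b) [:v:] = [:poly b v:]"
  by (induction b) (simp_all add: lift_y_pCons)

lemma shift_pCons: "shift_xy d (pCons a g) = [:[:a:]:] + [:[:-d,1:],1:] * shift_xy d g"
  by (simp add: shift_xy_def map_poly_pCons)

lemma ev_shift: "poly (poly (shift_xy d f) [:v:]) u = poly f (u+v-d)"
  by (induction f) (simp_all add: shift_pCons algebra_simps)

lemma ev_lift_x: "poly (poly (lift_x a) [:v:]) u = poly a u"
  by (simp add: lift_x_def)

lemma coeff_poly_const: "coeff (poly R [:v:]) i = poly (map_poly (\<lambda>a. coeff a i) R) v"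
  by (induction R) (simp_all add: map_poly_pCons)

lemma ev_inj:
  fixes P Q :: "'a::field_char_0 poly poly"
  assumes "\<And>u v. poly (poly P [:v:]) u = poly (poly Q [:v:]) u"
  shows "P = Q"
proof -
  have 1: "poly P [:v:] = poly Q [:v:]" for v
    using assms poly_eq_poly_eq_iff by blast
  have "poly (P - Q) [:v:] = 0" for v using 1 by simp
  hence "poly (map_poly (\<lambda>a. coeff a i) (P - Q)) v = 0" for v i
    by (metis coeff_0 coeff_poly_const)
  hence "map_poly (\<lambda>a. coeff a i) (P - Q) = 0" for i
    using poly_eq_poly_eq_iff[of "map_poly (\<lambda>a. coeff a i) (P - Q)" 0] by auto
  hence "coeff (coeff (P - Q) j) i = 0" for i j
    by (metis coeff_0 coeff_map_poly)
  hence "P - Q = 0" by (intro poly_eqI) (simp add: poly_eqI)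
  thus ?thesis by simp
qed

lemma pCons_eq_x: "pCons (a::'a::comm_ring_1) g = [:a:] + [:0,1:] * g"
  by simp

theorem part1:
  fixes p :: "nat \<Rightarrow> 'a::field_char_0 poly"
    and F :: "'a poly \<Rightarrow> 'a poly poly"
    and eps :: "'a poly \<Rightarrow> 'a"
  assumes deg: "\<And>n. degree (p n) = n"
    and F_add: "\<And>f g. F (f + g) = F f + F g"
    and F_smult: "\<And>a f. F (smult a f) = smult [:a:] (F f)"
    and F_p: "\<And>n. F (p n) = (\<Sum>k\<le>n. lift_x (p k) * lift_y (p (n - k)))"
    and eps_add: "\<And>f g. eps (f + g) = eps f + eps g"
    and eps_smult: "\<And>a f. eps (smult a f) = a * eps f"
    and eps_p: "\<And>n. eps (p n) = (if n = 0 then 1 else 0)"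
    and F_one: "F 1 = 1"
    and F_mult: "\<And>f g. F (f * g) = F f * F g"
    and eps_one: "eps 1 = 1"
    and eps_mult: "\<And>f g. eps (f * g) = eps f * eps g"
  shows "\<exists>c. (\<forall>f. F f = shift_xy c f) \<and> (\<forall>f. eps f = poly f c) \<and> p 0 = 1"
proof -
  have F0: "F 0 = 0" using F_add[of 0 0] by simp
  have e0: "eps 0 = 0" using eps_add[of 0 0] by simp
  have Fc: "F [:a:] = [:[:a:]:]" for a
    using F_smult[of a 1] F_one by simp
  have ec: "eps [:a:] = a" for a
    using eps_smult[of a 1] eps_one by simp
  have "p 0 = [:coeff (p 0) 0:]" using deg[of 0]
    by (metis degree0_coeffs coeff_pCons_0)
  then have p0: "p 0 = 1" using eps_p[of 0] ec by (metis one_pCons)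
  define a where "a = coeff (p 1) 1"
  define b where "b = coeff (p 1) 0"
  have a0: "a \<noteq> 0" unfolding a_def using deg[of 1]
    by (metis leading_coeff_0_iff degree_0 one_neq_zero)
  have p1: "p 1 = [:b, a:]" unfolding a_def b_def
  proof (rule poly_eqI)
    fix i show "coeff (p 1) i = coeff [:coeff (p 1) 0, coeff (p 1) 1:] i"
      using deg[of 1] by (cases i) (auto simp: coeff_pCons coeff_eq_0 split: nat.splits)
  qed
  define c where "c = - b / a"
  have p1': "p 1 = smult a [:0,1:] + [:b:]" using p1 by simp
  have "F (p 1) = lift_x (p 1) + lift_y (p 1)"
    using F_p[of 1] p0 by (simp add: lift_x_def lift_y_def)
  also have "\<dots> = [:[:b, a:], [:a:]:] + [:[:b:]:]"
    using p1 by (simp add: lift_x_def lift_y_def map_poly_pCons)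
  finally have "smult [:a:] (F [:0,1:]) + [:[:b:]:] = [:[:b, a:], [:a:]:] + [:[:b:]:]"
    using p1' F_add F_smult Fc by metis
  hence "smult [:a:] (F [:0,1:]) = [:[:b, a:], [:a:]:]"
    by (metis add_right_cancel)
  hence "smult [:a:] (F [:0,1:]) = smult [:a:] [:[:-c, 1:], 1:]"
    using a0 by (simp add: c_def)
  hence Fx: "F [:0,1:] = [:[:-c, 1:], 1:]" using a0 smult_cancel[of "[:a:]"] by simp
  have "F f = shift_xy c f" for f
  proof (induction f)
    case 0 then show ?case using F0 by simp
  next
    case (pCons a g)
    have "F (pCons a g) = F [:a:] + F [:0,1:] * F g" using pCons_eq_x F_add F_mult by metis
    then show ?case by (simp add: Fc Fx pCons(2) shift_pCons)
  qed
  moreover have "eps [:0,1:] = c"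
  proof -
    have "0 = eps (p 1)" using eps_p[of 1] by simp
    also have "\<dots> = a * eps [:0,1:] + b" using p1' eps_add eps_smult ec by metis
    finally show ?thesis using a0 unfolding c_def by (simp add: field_simps eq_neg_iff_add_eq_0 add.commute)
  qed
  hence "eps f = poly f c" for f
  proof (induction f)
    case 0 then show ?case using e0 by simp
  next
    case (pCons a g)
    have "eps (pCons a g) = eps [:a:] + eps [:0,1:] * eps g" using pCons_eq_x eps_add eps_mult by metis
    then show ?case by (simp add: ec pCons)
  qed
  ultimately show ?thesis using p0 by blast
qed

lemma ev_sum_prod:
  "poly (poly (\<Sum>k\<le>n. lift_x (f k) * lift_y (g k)) [:v:]) u = (\<Sum>k\<le>n. poly (f k) u * poly (g k) v)"
  by (simp add: poly_sum poly_lift_y lift_x_def mult.commute)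

lemma sheffer_part:
  fixes p :: "nat \<Rightarrow> 'a::field_char_0 poly"
  assumes deg: "\<And>n. degree (p n) = n"
    and Fp: "\<And>n. shift_xy c (p n) = (\<Sum>k\<le>n. lift_x (p k) * lift_y (p (n - k)))"
  shows "sheffer p"
proof -
  have E: "poly (p n) (u+v-c) = (\<Sum>k\<le>n. poly (p k) u * poly (p (n-k)) v)" for n u v
    using arg_cong[OF Fp[of n], of "\<lambda>P. poly (poly P [:v:]) u"] by (simp add: ev_shift ev_sum_prod)
  define q where "q n = pcompose (p n) [:c,1:]" for n
  have dq: "divided_power_seq q"
    unfolding divided_power_seq_def
  proof (intro conjI allI)
    fix n show "degree (q n) = n" by (simp add: q_def degree_pcompose deg)
  next
    fix n show "shift_xy 0 (q n) = (\<Sum>k\<le>n. lift_x (q k) * lift_y (q (n - k)))"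
    proof (rule ev_inj)
      fix u v
      have "poly (poly (shift_xy 0 (q n)) [:v:]) u = poly (p n) ((u+c)+(v+c)-c)"
        by (simp add: ev_shift q_def poly_pcompose algebra_simps)
      also have "\<dots> = poly (poly (\<Sum>k\<le>n. lift_x (q k) * lift_y (q (n - k))) [:v:]) u"
        unfolding E by (simp add: ev_sum_prod q_def poly_pcompose algebra_simps)
      finally show "poly (poly (shift_xy 0 (q n)) [:v:]) u = poly (poly (\<Sum>k\<le>n. lift_x (q k) * lift_y (q (n - k))) [:v:]) u" .
    qed
  qed
  have "shift_xy 0 (p n) = (\<Sum>k\<le>n. lift_y (q (n - k)) * lift_x (p k))" for n
  proof (rule ev_inj)
    fix u v
    have "poly (poly (shift_xy 0 (p n)) [:v:]) u = poly (p n) (u+(v+c)-c)"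
      by (simp add: ev_shift)
    also have "\<dots> = poly (poly (\<Sum>k\<le>n. lift_x (p k) * lift_y (q (n - k))) [:v:]) u"
      unfolding E by (simp add: ev_sum_prod q_def poly_pcompose algebra_simps)
    finally show "poly (poly (shift_xy 0 (p n)) [:v:]) u = poly (poly (\<Sum>k\<le>n. lift_y (q (n - k)) * lift_x (p k)) [:v:]) u"
      by (simp add: mult.commute)
  qed
  then show ?thesis unfolding sheffer_def using deg dq by blast
qed

lemma degree_lift_y: "degree (lift_y b) = degree b"
  unfolding lift_y_def by (rule degree_map_poly) simp

lemma coeff_lift_xy: "coeff (lift_x a * lift_y b) j = smult (coeff b j) a"
  by (simp add: lift_x_def lift_y_def coeff_map_poly)

lemma degree_lift_xy: "degree (lift_x a * lift_y b) \<le> degree b"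
proof -
  have "lift_x a * lift_y b = smult a (lift_y b)" by (simp add: lift_x_def)
  then show ?thesis using degree_smult_le[of a "lift_y b"] degree_lift_y[of b] by simp
qed

lemma mult_S_id_N:
  assumes "S 0 = 0" "degree P \<le> N"
  shows "mult_S_id S P = (\<Sum>j\<le>N. S (coeff P j) * monom 1 j)"
  unfolding mult_S_id_def
  by (rule sum.mono_neutral_left) (use assms in \<open>auto simp: coeff_eq_0\<close>)

lemma mult_id_S_N:
  assumes "degree P \<le> N"
  shows "mult_id_S S P = (\<Sum>j\<le>N. coeff P j * S (monom 1 j))"
  unfolding mult_id_S_def
  by (rule sum.mono_neutral_left) (use assms in \<open>auto simp: coeff_eq_0\<close>)

lemma S_0: fixes S :: "'a::comm_monoid_add \<Rightarrow> 'b::ab_group_add"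
  assumes "\<And>f g. S (f + g) = S f + S g" shows "S 0 = 0"
  using assms[of 0 0] by (metis add_cancel_right_right add_0)

lemma S_sum:
  assumes "\<And>f g. S (f + g) = S f + S g" "finite A"
  shows "S (\<Sum>i\<in>A. f i) = (\<Sum>i\<in>A. S (f i) :: 'b::ab_group_add)"
  using assms(2) by induction (simp_all add: S_0[OF assms(1)] assms(1))

lemma mult_S_id_add:
  assumes Sadd: "\<And>f g. S (f + g) = S f + S g"
  shows "mult_S_id S (P + Q) = mult_S_id S P + mult_S_id S Q"
proof -
  define N where "N = degree P + degree Q"
  have "degree (P + Q) \<le> N" unfolding N_def
    by (metis add_leE degree_add_le le_add1 le_add2 order_refl)
  moreover have "degree P \<le> N" "degree Q \<le> N" unfolding N_def by auto
  ultimately show ?thesis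
    using S_0[OF Sadd] by (simp add: mult_S_id_N Sadd sum.distrib distrib_right)
qed

lemma mult_id_S_add:
  "mult_id_S S (P + Q) = mult_id_S S P + mult_id_S S Q"
proof -
  define N where "N = degree P + degree Q"
  have "degree (P + Q) \<le> N" unfolding N_def
    by (metis add_leE degree_add_le le_add1 le_add2 order_refl)
  moreover have "degree P \<le> N" "degree Q \<le> N" unfolding N_def by auto
  ultimately show ?thesis
    by (simp add: mult_id_S_N sum.distrib distrib_right)
qed

lemma smult_sum_right: "smult a (\<Sum>i\<in>A. f i) = (\<Sum>i\<in>A. smult a (f i))"
  by (induction A rule: infinite_finite_induct) (simp_all add: smult_add_right)

lemma mult_S_id_smult:
  assumes Sadd: "\<And>f g. S (f + g) = S f + S g" and Ssm: "\<And>a f. S (smult a f) = smult a (S f)"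
  shows "mult_S_id S (smult [:a:] P) = smult a (mult_S_id S P)"
proof -
  have "degree (smult [:a:] P) \<le> degree P" by (rule degree_smult_le)
  then have "mult_S_id S (smult [:a:] P) = (\<Sum>j\<le>degree P. S (coeff (smult [:a:] P) j) * monom 1 j)"
    using S_0[OF Sadd] by (simp add: mult_S_id_N)
  also have "\<dots> = smult a (\<Sum>j\<le>degree P. S (coeff P j) * monom 1 j)"
    by (simp add: Ssm smult_sum_right)
  finally show ?thesis by (simp add: mult_S_id_def)
qed

lemma mult_id_S_smult:
  "mult_id_S S (smult [:a:] P) = smult a (mult_id_S S P)"
proof -
  have "degree (smult [:a:] P) \<le> degree P" by (rule degree_smult_le)
  then have "mult_id_S S (smult [:a:] P) = (\<Sum>j\<le>degree P. coeff (smult [:a:] P) j * S (monom 1 j))"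
    by (simp add: mult_id_S_N)
  also have "\<dots> = smult a (\<Sum>j\<le>degree P. coeff P j * S (monom 1 j))"
    by (simp add: smult_sum_right)
  finally show ?thesis by (simp add: mult_id_S_def)
qed

lemma mult_S_id_0: "mult_S_id S 0 = S 0"
  by (simp add: mult_S_id_def)

lemma mult_S_id_lin:
  assumes Sadd: "\<And>f g. S (f + g) = S f + S g" and Ssm: "\<And>a f. S (smult a f) = smult a (S f)"
    and "finite A"
  shows "mult_S_id S (\<Sum>i\<in>A. smult [:a i:] (P i)) = (\<Sum>i\<in>A. smult (a i) (mult_S_id S (P i)))"
  using assms(3) by induction
    (simp_all add: mult_S_id_0 S_0[OF Sadd] mult_S_id_add[OF Sadd] mult_S_id_smult[OF Sadd Ssm])

lemma mult_id_S_0: "mult_id_S S 0 = 0"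
  by (simp add: mult_id_S_def)

lemma mult_id_S_lin:
  assumes "finite A"
  shows "mult_id_S S (\<Sum>i\<in>A. smult [:a i:] (P i)) = (\<Sum>i\<in>A. smult (a i) (mult_id_S S (P i)))"
  using assms by induction
    (simp_all add: mult_id_S_0 mult_id_S_add mult_id_S_smult)

lemma mult_S_id_xy:
  assumes Sadd: "\<And>f g. S (f + g) = S f + S g" and Ssm: "\<And>a f. S (smult a f) = smult a (S f)"
  shows "mult_S_id S (lift_x a * lift_y b) = S a * b"
proof -
  have "mult_S_id S (lift_x a * lift_y b) = (\<Sum>j\<le>degree b. S (smult (coeff b j) a) * monom 1 j)"
    using S_0[OF Sadd] by (subst mult_S_id_N[where N="degree b"]) (simp_all add: degree_lift_xy coeff_lift_xy)
  also have "\<dots> = S a * (\<Sum>j\<le>degree b. monom (coeff b j) j)"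
    unfolding Ssm sum_distrib_left mult_smult_left
    by (intro sum.cong refl) (metis mult_smult_right smult_monom mult.right_neutral)
  finally show ?thesis by (simp add: poly_as_sum_of_monoms)
qed

lemma mult_id_S_xy:
  assumes Sadd: "\<And>f g. S (f + g) = S f + S g" and Ssm: "\<And>a f. S (smult a f) = smult a (S f)"
  shows "mult_id_S S (lift_x a * lift_y b) = a * S b"
proof -
  have "mult_id_S S (lift_x a * lift_y b) = (\<Sum>j\<le>degree b. smult (coeff b j) a * S (monom 1 j))"
    by (subst mult_id_S_N[where N="degree b"]) (simp_all add: degree_lift_xy coeff_lift_xy)
  also have "\<dots> = a * S (\<Sum>j\<le>degree b. smult (coeff b j) (monom 1 j))"
    by (simp add: S_sum[OF Sadd] Ssm sum_distrib_left)
  also have "(\<Sum>j\<le>degree b. smult (coeff b j) (monom 1 j)) = b"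
    by (simp add: smult_monom poly_as_sum_of_monoms)
  finally show ?thesis .
qed

lemma const_sum: "(\<Sum>i\<in>A. [:f i:]) = [:(\<Sum>i\<in>A. f i):]"
  by (induction A rule: infinite_finite_induct) simp_all

lemma neg1_pow_mult: "(-1::'a::comm_ring_1 poly)^k * X = smult ((-1)^k) X"
  by (induction k) simp_all

lemma ev_smult: "poly (poly (smult [:a:] P) [:v:]) u = a * poly (poly P [:v:]) u"
  by simp

lemma antipode_part:
  fixes c :: "'a::field_char_0" and \<omega> :: "'a poly \<Rightarrow> 'a poly"
  assumes wadd: "\<And>f g. \<omega> (f + g) = \<omega> f + \<omega> g"
    and wsm: "\<And>a f. \<omega> (smult a f) = smult a (\<omega> f)"
    and wpow: "\<And>n. \<omega> ([:-c, 1:] ^ n) = (-1) ^ n * [:-c, 1:] ^ n"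
  shows "is_antipode (shift_xy c) (\<lambda>f. poly f c) \<omega>"
proof -
  define u where "u = [:-c, 1:]"
  have wpow': "\<omega> (u^n) = (-1)^n * u^n" for n using wpow u_def by simp
  have un: "k \<le> n \<Longrightarrow> u^k * u^(n-k) = u^n" for k n by (simp add: power_add[symmetric])
  have E1: "shift_xy c (u^n) = (\<Sum>k\<le>n. smult [:of_nat (n choose k):] (lift_x (u^k) * lift_y (u^(n-k))))" for n
  proof (rule ev_inj)
    fix x y
    show "poly (poly (shift_xy c (u^n)) [:y:]) x = poly (poly (\<Sum>k\<le>n. smult [:of_nat (n choose k):] (lift_x (u^k) * lift_y (u^(n-k)))) [:y:]) x"
      using binomial_ring[of "x-c" "y-c" n]
      by (simp add: ev_shift u_def poly_sum poly_lift_y lift_x_def algebra_simps)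
  qed
  have E2: "shift_xy c (u^n) = (\<Sum>k\<le>n. smult [:of_nat (n choose k):] (lift_x (u^(n-k)) * lift_y (u^k)))" for n
  proof (rule ev_inj)
    fix x y
    show "poly (poly (shift_xy c (u^n)) [:y:]) x = poly (poly (\<Sum>k\<le>n. smult [:of_nat (n choose k):] (lift_x (u^(n-k)) * lift_y (u^k))) [:y:]) x"
      using binomial_ring[of "y-c" "x-c" n]
      by (simp add: ev_shift u_def poly_sum poly_lift_y lift_x_def algebra_simps)
  qed
  have alt: "(\<Sum>k\<le>n. smult (of_nat (n choose k)) ((-1)^k * u^n)) = [:poly (u^n) c:]" for n
  proof -
    have "(\<Sum>k\<le>n. smult (of_nat (n choose k)) ((-1)^k * u^n)) = (\<Sum>k\<le>n. smult (of_nat (n choose k) * (-1)^k) (u^n))"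
      by (intro sum.cong refl) (simp only: neg1_pow_mult smult_smult)
    also have "\<dots> = smult (\<Sum>k\<le>n. (-1)^k * of_nat (n choose k)) (u^n)"
      by (simp add: smult_sum mult.commute)
    also have "\<dots> = [:poly (u^n) c:]"
    proof (cases "n = 0")
      case True then show ?thesis by simp
    next
      case False then show ?thesis by (simp add: choose_alternating_sum u_def)
    qed
    finally show ?thesis .
  qed
  have B1: "mult_S_id \<omega> (shift_xy c (u^n)) = [:poly (u^n) c:]" for n
  proof -
    have "mult_S_id \<omega> (shift_xy c (u^n)) = (\<Sum>k\<le>n. smult (of_nat (n choose k)) (\<omega> (u^k) * u^(n-k)))"
      unfolding E1 by (simp add: mult_S_id_lin[OF wadd wsm] mult_S_id_xy[OF wadd wsm])
    also have "\<dots> = (\<Sum>k\<le>n. smult (of_nat (n choose k)) ((-1)^k * u^n))"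
      by (intro sum.cong refl) (simp add: wpow' un mult.assoc)
    finally show ?thesis using alt by simp
  qed
  have B2: "mult_id_S \<omega> (shift_xy c (u^n)) = [:poly (u^n) c:]" for n
  proof -
    have "mult_id_S \<omega> (shift_xy c (u^n)) = (\<Sum>k\<le>n. smult (of_nat (n choose k)) (u^(n-k) * \<omega> (u^k)))"
      unfolding E2 by (simp add: mult_id_S_lin mult_id_S_xy[OF wadd wsm])
    also have "\<dots> = (\<Sum>k\<le>n. smult (of_nat (n choose k)) ((-1)^k * u^n))"
    proof (intro sum.cong refl)
      fix k assume "k \<in> {..n}"
      then have "u^k * u^(n-k) = u^n" using un by simp
      moreover have "u^(n-k) * \<omega> (u^k) = (-1)^k * (u^k * u^(n-k))"
        unfolding wpow' by (simp only: ac_simps)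
      ultimately show "smult (of_nat (n choose k)) (u^(n-k) * \<omega> (u^k)) = smult (of_nat (n choose k)) ((-1)^k * u^n)"
        by simp
    qed
    finally show ?thesis using alt by simp
  qed
  have D: "shift_xy c q = (\<Sum>i\<le>degree (pcompose q [:c,1:]). smult [:coeff (pcompose q [:c,1:]) i:] (shift_xy c (u^i)))" for q
  proof (rule ev_inj)
    fix x y
    have "poly (poly (shift_xy c q) [:y:]) x = poly (pcompose q [:c,1:]) (x + y - c - c)"
      by (simp add: ev_shift poly_pcompose)
    also have "\<dots> = poly (poly (\<Sum>i\<le>degree (pcompose q [:c,1:]). smult [:coeff (pcompose q [:c,1:]) i:] (shift_xy c (u^i))) [:y:]) x"
      by (subst poly_altdef) (simp add: poly_sum ev_shift u_def algebra_simps)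
    finally show "poly (poly (shift_xy c q) [:y:]) x = poly (poly (\<Sum>i\<le>degree (pcompose q [:c,1:]). smult [:coeff (pcompose q [:c,1:]) i:] (shift_xy c (u^i))) [:y:]) x" .
  qed
  have P: "(\<Sum>i\<le>degree (pcompose q [:c,1:]). smult (coeff (pcompose q [:c,1:]) i) [:poly (u^i) c:]) = [:poly q c:]" for q
  proof -
    have "poly q c = poly (pcompose q [:c,1:]) (poly u c)" by (simp add: poly_pcompose u_def)
    also have "\<dots> = (\<Sum>i\<le>degree (pcompose q [:c,1:]). coeff (pcompose q [:c,1:]) i * poly u c ^ i)"
      by (rule poly_altdef)
    finally have pq: "poly q c = (\<Sum>i\<le>degree (pcompose q [:c,1:]). coeff (pcompose q [:c,1:]) i * poly u c ^ i)" .
    have "(\<Sum>i\<le>degree (pcompose q [:c,1:]). smult (coeff (pcompose q [:c,1:]) i) [:poly (u^i) c:])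
      = (\<Sum>i\<le>degree (pcompose q [:c,1:]). [:coeff (pcompose q [:c,1:]) i * poly u c ^ i:])" by simp
    also have "\<dots> = [:(\<Sum>i\<le>degree (pcompose q [:c,1:]). coeff (pcompose q [:c,1:]) i * poly u c ^ i):]"
      by (rule const_sum)
    finally show ?thesis unfolding pq[symmetric] .
  qed
  show ?thesis unfolding is_antipode_def
  proof (intro allI conjI)
    fix q
    show "mult_S_id \<omega> (shift_xy c q) = [:poly q c:]"
      by (subst D) (simp only: mult_S_id_lin[OF wadd wsm] B1 P finite_atMost)
    show "mult_id_S \<omega> (shift_xy c q) = [:poly q c:]"
      by (subst D) (simp only: mult_id_S_lin B2 P finite_atMost)
  qed
qed



theorem corollary2:
  fixes p :: "nat \<Rightarrow> 'a::field_char_0 poly"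
    and F :: "'a poly \<Rightarrow> 'a poly poly"
    and eps :: "'a poly \<Rightarrow> 'a"
  assumes deg: "\<And>n. degree (p n) = n"
    and F_add: "\<And>f g. F (f + g) = F f + F g"
    and F_smult: "\<And>a f. F (smult a f) = smult [:a:] (F f)"
    and F_p: "\<And>n. F (p n) = (\<Sum>k\<le>n. lift_x (p k) * lift_y (p (n - k)))"
    and eps_add: "\<And>f g. eps (f + g) = eps f + eps g"
    and eps_smult: "\<And>a f. eps (smult a f) = a * eps f"
    and eps_p: "\<And>n. eps (p n) = (if n = 0 then 1 else 0)"
    and F_one: "F 1 = 1"
    and F_mult: "\<And>f g. F (f * g) = F f * F g"
    and eps_one: "eps 1 = 1"
    and eps_mult: "\<And>f g. eps (f * g) = eps f * eps g"
  shows "\<exists>c. (\<forall>f. F f = shift_xy c f)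
           \<and> sheffer p
           \<and> (\<forall>f. eps f = poly f c)
           \<and> (\<forall>\<omega>. (\<forall>f g. \<omega> (f + g) = \<omega> f + \<omega> g)
                  \<and> (\<forall>a f. \<omega> (smult a f) = smult a (\<omega> f))
                  \<and> (\<forall>n. \<omega> ([:-c, 1:] ^ n) = (-1) ^ n * [:-c, 1:] ^ n)
                  \<longrightarrow> is_antipode F eps \<omega>)"
proof -
  obtain c where Fc: "\<forall>f. F f = shift_xy c f" and ec: "\<forall>f. eps f = poly f c"
    using part1[OF assms] by blast
  have FF: "F = shift_xy c" using Fc by auto
  have EE: "eps = (\<lambda>f. poly f c)" using ec by auto
  have sh: "sheffer p"
    by (rule sheffer_part[OF deg]) (use F_p Fc in auto)
  show ?thesis
    apply (rule exI[of _ c])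
    using Fc ec sh antipode_part[of _ c] unfolding FF EE by blast
qed

end
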